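(* In the roundabout exploration process described in the context, for every $t\in[N]$, no two active agents are in the same state after step $t$; i.e., for distinct $a_i,a_j\in A(t)$ we have $s_i(t)\neq s_j(t)$.
   Context: Let $n\ge 2$ and $k$ be natural numbers, $T$ a tree on an $n$-element vertex set $V$, and $N=2(n-1)$. Fix a root $r$ and a DFS tour of $T$ starting and ending at $r$ that traverses each edge of $T$ exactly twice, giving a cyclic vertex sequence $(v_1,\dots,v_N,v_{N+1})$ with $v_{N+1}=v_1=r$, and tour edges $e_i=\{v_i,v_{i+1}\}$ for $i\in[N]$ (each an edge of $T$). For $i,j\in[N]$ the circular interval $[\![i,j]\!]$ is $\{i,i+1,\dots,j\}$ if $i\le j$ and $\{i,\dots,N,1,\dots,j\}$ if $i>j$; $[\![i,j[\![$ denotes $[\![i,j]\!]\setminus\{j\}$. Let $\langle G_1,\dots,G_N\rangle$ be graphs on $V$, each containing all but at most $k$ edges of $T$. Roundabout exploration process: there are agents $a_1,\dots,a_N$ with initial states $s_i(0)=i$. For steps $t=1,\dots,N$: (Movement) for every $i\in[N]$, if $s_i(t-1)=q$ then $s_i(t)=(q\bmod N)+1$ if $e_q\in E(G_t)$, and $s_i(t)=q$ otherwise. Let $D_i(t)=[\![i,s_i(t)]\!]$ (the visited states) and $D_i(0)=\{i\}$. (Elimination) Let $A(0)=\{a_1,\dots,a_N\}$; $A(t)$ is obtained from $A(t-1)$ by repeatedly removing an arbitrary agent $a_i$ of the current set that is redundant, i.e. $D_i(t)\subseteq\bigcup D_j(t)$ over the other agents $a_j$ of the current set, until no redundant agent remains.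 The agents in $A(t)$ are called active after step $t$. *)

theory Defs
  imports Main
begin

definition graph_on :: "'a set \<Rightarrow> 'a set set \<Rightarrow> bool" where
  "graph_on V E \<longleftrightarrow> E \<subseteq> {{x, y} | x y. x \<in> V \<and> y \<in> V \<and> x \<noteq> y}"

definition adj :: "'a set set \<Rightarrow> 'a \<Rightarrow> 'a \<Rightarrow> bool" where
  "adj E u v \<longleftrightarrow> {u, v} \<in> E"

definition is_tree :: "'a set \<Rightarrow> 'a set set \<Rightarrow> bool" where
  "is_tree V E \<longleftrightarrow> graph_on V E
     \<and> (\<forall>u\<in>V. \<forall>w\<in>V. (adj E)\<^sup>*\<^sup>* u w)
     \<and> (\<forall>e\<in>E. \<forall>u w. e = {u, w} \<longrightarrow> \<not> (adj (E - {e}))\<^sup>*\<^sup>* u w)"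

(* closed walk v_1 .. v_{N+1} from r to r traversing every tree edge exactly twice
   (in a tree this is exactly a DFS tour) *)
definition dfs_tour :: "'a set set \<Rightarrow> 'a \<Rightarrow> nat \<Rightarrow> (nat \<Rightarrow> 'a) \<Rightarrow> bool" where
  "dfs_tour E r N v \<longleftrightarrow> v 1 = r \<and> v (N + 1) = r
     \<and> (\<forall>i\<in>{1..N}. {v i, v (Suc i)} \<in> E)
     \<and> (\<forall>e\<in>E. card {i \<in> {1..N}. {v i, v (Suc i)} = e} = 2)"

definition cint :: "nat \<Rightarrow> nat \<Rightarrow> nat \<Rightarrow> nat set" where
  "cint N i j = (if i \<le> j then {i..j} else {i..N} \<union> {1..j})"

fun st :: "nat \<Rightarrow> (nat \<Rightarrow> 'a) \<Rightarrow> (nat \<Rightarrow> 'a set set) \<Rightarrow> nat \<Rightarrow> nat \<Rightarrow> nat" where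
  "st N v G i 0 = i"
| "st N v G i (Suc t) =
     (let q = st N v G i t in if {v q, v (Suc q)} \<in> G (Suc t) then q mod N + 1 else q)"

definition visited :: "nat \<Rightarrow> (nat \<Rightarrow> 'a) \<Rightarrow> (nat \<Rightarrow> 'a set set) \<Rightarrow> nat \<Rightarrow> nat \<Rightarrow> nat set" where
  "visited N v G i t = (if t = 0 then {i} else cint N i (st N v G i t))"

definition redundant :: "(nat \<Rightarrow> nat set) \<Rightarrow> nat set \<Rightarrow> nat \<Rightarrow> bool" where
  "redundant D S i \<longleftrightarrow> i \<in> S \<and> D i \<subseteq> (\<Union>j\<in>S - {i}. D j)"

definition elim_step :: "(nat \<Rightarrow> nat set) \<Rightarrow> nat set \<Rightarrow> nat set \<Rightarrow> bool" where
  "elim_step D S S' \<longleftrightarrow> (\<exists>i. redundant D S i \<and> S' = S - {i})"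

definition elim_result :: "(nat \<Rightarrow> nat set) \<Rightarrow> nat set \<Rightarrow> nat set \<Rightarrow> bool" where
  "elim_result D S S' \<longleftrightarrow> (elim_step D)\<^sup>*\<^sup>* S S' \<and> (\<forall>i\<in>S'. \<not> redundant D S' i)"

end

theory Submission
  imports Defs
begin

lemma elim_rt_sub: "(elim_step D)\<^sup>*\<^sup>* S S' \<Longrightarrow> S' \<subseteq> S"
  by (induction rule: rtranclp_induct) (auto simp: elim_step_def)

lemma cint_nested:
  assumes "1 \<le> i" "1 \<le> j"
  shows "cint N i s \<subseteq> cint N j s \<or> cint N j s \<subseteq> cint N i s"
  using assms by (auto simp: cint_def)

theorem lemma5:
  fixes V :: "'a set" and E :: "'a set set" and r :: 'a and v :: "nat \<Rightarrow> 'a"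
    and G :: "nat \<Rightarrow> 'a set set" and n k N :: nat and A :: "nat \<Rightarrow> nat set"
  assumes "finite V" and "card V = n" and "n \<ge> 2"
    and "is_tree V E" and "r \<in> V"
    and "N = 2 * (n - 1)"
    and "dfs_tour E r N v"
    and "\<forall>t\<in>{1..N}. graph_on V (G t) \<and> card (E - G t) \<le> k"
    and "A 0 = {1..N}"
    and "\<forall>t\<in>{1..N}. elim_result (\<lambda>i. visited N v G i t) (A (t - 1)) (A t)"
  shows "\<forall>t\<in>{1..N}. \<forall>i\<in>A t. \<forall>j\<in>A t. i \<noteq> j \<longrightarrow> st N v G i t \<noteq> st N v G j t"
proof -
  have sub: "t \<le> N \<Longrightarrow> A t \<subseteq> {1..N}" for t
  proof (induction t)
    case 0 then show ?case using assms(9) by simp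
  next
    case (Suc t)
    then have "elim_result (\<lambda>i. visited N v G i (Suc t)) (A t) (A (Suc t))"
      using assms(10) Suc.prems by (metis atLeastAtMost_iff diff_Suc_1 le_add1 plus_1_eq_Suc)
    then have "A (Suc t) \<subseteq> A t" using elim_rt_sub by (auto simp: elim_result_def)
    then show ?case using Suc by auto
  qed
  show ?thesis
  proof (intro ballI impI notI)
    fix t i j assume t: "t \<in> {1..N}" and i: "i \<in> A t" and j: "j \<in> A t" and ij: "i \<noteq> j"
      and eq: "st N v G i t = st N v G j t"
    let ?D = "\<lambda>i. visited N v G i t"
    have er: "elim_result ?D (A (t - 1)) (A t)" using assms(10) t by blast
    have i1: "1 \<le> i" and j1: "1 \<le> j" using sub[of t] t i j by auto
    have Di: "?D i = cint N i (st N v G i t)" and Dj: "?D j = cint N j (st N v G i t)"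
      using t eq by (auto simp: visited_def)
    from cint_nested[OF i1 j1, of N "st N v G i t"]
    have "?D i \<subseteq> ?D j \<or> ?D j \<subseteq> ?D i" using Di Dj by simp
    then have "redundant ?D (A t) i \<or> redundant ?D (A t) j"
      unfolding redundant_def using i j ij by blast
    then show False using er i j unfolding elim_result_def by blast
  qed
qed

end
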